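(* Let $T$ be a nonabelian finite simple group and let $A,B$ be proper subgroups of $T$ with $T=AB$. Let $M=T^2$, $G=T\wr S_2=M\rtimes S_2$ (with $S_2$ swapping coordinates), $K_1=A\times B$ and $K_2=B\times A$. Then $K_1\cap K_2=(A\cap B)\times(A\cap B)$ is normalised by $S_2$; $G$ acts transitively on the coset space $\Omega$ of $H=(K_1\cap K_2)\rtimes S_2$, with $M$ a transitive minimal normal subgroup; and for $\omega=H$: (a) $\{K_1,K_2\}$ is a Cartesian system of subgroups in $M$ with respect to $\omega$ which is not $M$-normal and has $|\mathcal F_i|=2$; (b) $\{(A\cap B)\times T,\ T\times(A\cap B)\}$ is also a Cartesian system of subgroups in $M$ with respect to $\omega$, and it is $M$-normal.
   Context: For $G$ innately transitive on $\Omega$ (i.e. with a transitive minimal normal subgroup, a plinth) with plinth $M$ and $\omega\in\Omega$, a Cartesian system of subgroups in $M$ with respect to $\omega$ is a $G_\omega$-conjugation-invariant set $\{K_1,\ldots,K_\ell\}$ of subgroups of $M$ with $\bigcap_i K_i=M_\omega$ and $K_i\bigl(\bigcap_{j\ne i}K_j\bigr)=M$ for all $i$. It is $M$-normal if there are normal subgroups $M_1,\ldots,M_\ell$ of $M$ with $M=M_1\times\cdots\times M_\ell$ and $K_i=(M_i\cap M_\omega)\times\prod_{j\ne i}M_j$ for all $i$. For $M=T_1\times\cdots\times T_k$ with simple factors $T_i$ and projections $\sigma_i:M\to T_i$, $\mathcal F_i=\{\sigma_i(K_j):\sigma_i(K_j)\ne T_i\}$. *)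

theory Defs
  imports "HOL-Algebra.Algebra" "HOL-Algebra.Left_Coset"
begin

text \<open>An element ((x,y),s) stands for
  (x,y) * sigma^s, where sigma is the swap (s = True means sigma is present).\<close>

definition wreath2 :: "('a, 'b) monoid_scheme \<Rightarrow> (('a \<times> 'a) \<times> bool) monoid" where
  "wreath2 T =
     \<lparr> carrier = (carrier T \<times> carrier T) \<times> UNIV,
       monoid.mult = (\<lambda>((x1, y1), s) ((x2, y2), t).
          ((if s then (x1 \<otimes>\<^bsub>T\<^esub> y2, y1 \<otimes>\<^bsub>T\<^esub> x2)
                 else (x1 \<otimes>\<^bsub>T\<^esub> x2, y1 \<otimes>\<^bsub>T\<^esub> y2)), s \<noteq> t)),
       one = ((\<one>\<^bsub>T\<^esub>, \<one>\<^bsub>T\<^esub>), False) \<rparr>"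

definition base2 :: "('a, 'b) monoid_scheme \<Rightarrow> (('a \<times> 'a) \<times> bool) set" where
  "base2 T = (carrier T \<times> carrier T) \<times> {False}"

definition swap2 :: "('a, 'b) monoid_scheme \<Rightarrow> ('a \<times> 'a) \<times> bool" where
  "swap2 T = ((\<one>\<^bsub>T\<^esub>, \<one>\<^bsub>T\<^esub>), True)"

definition bprod :: "'a set \<Rightarrow> 'a set \<Rightarrow> (('a \<times> 'a) \<times> bool) set" where
  "bprod P Q = Sigma (Sigma P (\<lambda>_. Q)) (\<lambda>_. {False})"

definition coset_action :: "('g, 'c) monoid_scheme \<Rightarrow> 'g set \<Rightarrow> 'g \<Rightarrow> 'g set \<Rightarrow> 'g set" where
  "coset_action G H g = (\<lambda>C \<in> lcosets\<^bsub>G\<^esub> H. g <#\<^bsub>G\<^esub> C)"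

definition minimal_normal :: "'g set \<Rightarrow> ('g, 'c) monoid_scheme \<Rightarrow> bool" where
  "minimal_normal N G \<longleftrightarrow> N \<lhd> G \<and> N \<noteq> {\<one>\<^bsub>G\<^esub>} \<and>
     (\<forall>L. L \<lhd> G \<and> L \<subseteq> N \<longrightarrow> L = {\<one>\<^bsub>G\<^esub>} \<or> L = N)"

definition transitive_on :: "'g set \<Rightarrow> 'x set \<Rightarrow> ('g \<Rightarrow> 'x \<Rightarrow> 'x) \<Rightarrow> bool" where
  "transitive_on N E \<phi> \<longleftrightarrow> (\<forall>x\<in>E. \<forall>y\<in>E. \<exists>n\<in>N. \<phi> n x = y)"

text \<open>The set of subgroups {K_1,...,K_l} is represented as a
  finite set of subgroups; M_w = M \<inter> G_w.\<close>
definition cartesian_system ::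
  "('g, 'c) monoid_scheme \<Rightarrow> ('g \<Rightarrow> 'x \<Rightarrow> 'x) \<Rightarrow> 'g set \<Rightarrow> 'x \<Rightarrow> 'g set set \<Rightarrow> bool" where
  "cartesian_system G \<phi> M w \<K> \<longleftrightarrow>
     finite \<K> \<and> \<K> \<noteq> {} \<and>
     (\<forall>K\<in>\<K>. subgroup K G \<and> K \<subseteq> M) \<and>
     (\<forall>g\<in>stabilizer G \<phi> w. \<forall>K\<in>\<K>. (\<lambda>k. g \<otimes>\<^bsub>G\<^esub> k \<otimes>\<^bsub>G\<^esub> inv\<^bsub>G\<^esub> g) ` K \<in> \<K>) \<and>
     \<Inter>\<K> = M \<inter> stabilizer G \<phi> w \<and>
     (\<forall>K\<in>\<K>. K <#>\<^bsub>G\<^esub> (M \<inter> \<Inter>(\<K> - {K})) = M)"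

text \<open>M-normality: there are normal subgroups M_i of M (one for each K_i) such that
  M is the internal direct product of the M_i and
  K_i = (M_i \<inter> M_w) x prod_{j \<noteq> i} M_j.  The product of the M_j (j \<noteq> i), which
  pairwise commute, is the subgroup they generate.\<close>
definition M_normal ::
  "('g, 'c) monoid_scheme \<Rightarrow> ('g \<Rightarrow> 'x \<Rightarrow> 'x) \<Rightarrow> 'g set \<Rightarrow> 'x \<Rightarrow> 'g set set \<Rightarrow> bool" where
  "M_normal G \<phi> M w \<K> \<longleftrightarrow>
     (\<exists>N :: 'g set \<Rightarrow> 'g set.
        (\<forall>K\<in>\<K>. N K \<subseteq> M \<and> N K \<lhd> (G\<lparr>carrier := M\<rparr>)) \<and>
        generate G (\<Union>K\<in>\<K>. N K) = M \<and>
        (\<forall>K\<in>\<K>. N K \<inter> generate G (\<Union>K'\<in>\<K> - {K}. N K') = {\<one>\<^bsub>G\<^esub>}) \<and>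
        (\<forall>K\<in>\<K>. K = (N K \<inter> (M \<inter> stabilizer G \<phi> w)) <#>\<^bsub>G\<^esub>
                       generate G (\<Union>K'\<in>\<K> - {K}. N K')))"

end

theory Submission
  imports Defs
begin


lemma wr_carrier[simp]: "carrier (wreath2 T) = (carrier T \<times> carrier T) \<times> UNIV"
  by (simp add: wreath2_def)
lemma wr_one[simp]: "\<one>\<^bsub>wreath2 T\<^esub> = ((\<one>\<^bsub>T\<^esub>, \<one>\<^bsub>T\<^esub>), False)"
  by (simp add: wreath2_def)
lemma wr_mult[simp]: "((x1,y1),s) \<otimes>\<^bsub>wreath2 T\<^esub> ((x2,y2),t) =
   ((if s then (x1 \<otimes>\<^bsub>T\<^esub> y2, y1 \<otimes>\<^bsub>T\<^esub> x2) else (x1 \<otimes>\<^bsub>T\<^esub> x2, y1 \<otimes>\<^bsub>T\<^esub> y2)), s \<noteq> t)"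
  by (simp add: wreath2_def)

lemma wr_group: assumes "group T" shows "group (wreath2 T)"
proof -
  interpret T: group T by fact
  show ?thesis
  proof (rule groupI)
    fix x y assume "x \<in> carrier (wreath2 T)" "y \<in> carrier (wreath2 T)"
    then show "x \<otimes>\<^bsub>wreath2 T\<^esub> y \<in> carrier (wreath2 T)"
      by (cases x; cases y) auto
  next
    show "\<one>\<^bsub>wreath2 T\<^esub> \<in> carrier (wreath2 T)" by simp
  next
    fix x y z assume "x \<in> carrier (wreath2 T)" "y \<in> carrier (wreath2 T)" "z \<in> carrier (wreath2 T)"
    then show "x \<otimes>\<^bsub>wreath2 T\<^esub> y \<otimes>\<^bsub>wreath2 T\<^esub> z = x \<otimes>\<^bsub>wreath2 T\<^esub> (y \<otimes>\<^bsub>wreath2 T\<^esub> z)"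
      by (cases x; cases y; cases z) (auto simp: T.m_assoc)
  next
    fix x assume "x \<in> carrier (wreath2 T)"
    then show "\<one>\<^bsub>wreath2 T\<^esub> \<otimes>\<^bsub>wreath2 T\<^esub> x = x" by (cases x) auto
  next
    fix x assume x: "x \<in> carrier (wreath2 T)"
    obtain a b s where xe: "x = ((a,b),s)" by (cases x) auto
    show "\<exists>y\<in>carrier (wreath2 T). y \<otimes>\<^bsub>wreath2 T\<^esub> x = \<one>\<^bsub>wreath2 T\<^esub>"
    proof (cases s)
      case True
      then show ?thesis using x xe
        by (intro bexI[of _ "((inv\<^bsub>T\<^esub> b, inv\<^bsub>T\<^esub> a), True)"]) auto
    next
      case False
      then show ?thesis using x xe
        by (intro bexI[of _ "((inv\<^bsub>T\<^esub> a, inv\<^bsub>T\<^esub> b), False)"]) auto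
    qed
  qed
qed

lemma wr_inv[simp]: assumes "group T" "x \<in> carrier T" "y \<in> carrier T"
  shows "inv\<^bsub>wreath2 T\<^esub> ((x,y),s) = (if s then ((inv\<^bsub>T\<^esub> y, inv\<^bsub>T\<^esub> x),True) else ((inv\<^bsub>T\<^esub> x, inv\<^bsub>T\<^esub> y),False))"
proof -
  interpret T: group T by fact
  interpret W: group "wreath2 T" using wr_group assms by blast
  show ?thesis using assms by (intro W.inv_equality) auto
qed



lemma (in group) coset_action_hom:
  assumes H: "subgroup H G"
  shows "group_hom G (BijGroup (lcosets H)) (coset_action G H)"
proof -
  have lc: "\<And>C. C \<in> lcosets H \<Longrightarrow> C \<subseteq> carrier G"
  proof -
    fix C assume "C \<in> lcosets H"
    then obtain a where "a \<in> carrier G" "C = a <# H" by (auto simp: LCOSETS_def)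
    then show "C \<subseteq> carrier G" using l_coset_subset_G[OF subgroup.subset[OF H]] by blast
  qed
  have cl: "\<And>g C. g \<in> carrier G \<Longrightarrow> C \<in> lcosets H \<Longrightarrow> g <# C \<in> lcosets H"
  proof -
    fix g C assume g: "g \<in> carrier G" and C: "C \<in> lcosets H"
    then obtain a where a: "a \<in> carrier G" "C = a <# H" by (auto simp: LCOSETS_def)
    then have "g <# C = (g \<otimes> a) <# H" using lcos_m_assoc[OF subgroup.subset[OF H] g a(1)] by simp
    then show "g <# C \<in> lcosets H" using a g by (auto simp: LCOSETS_def)
  qed
  have bij: "\<And>g. g \<in> carrier G \<Longrightarrow> coset_action G H g \<in> Bij (lcosets H)"
  proof -
    fix g assume g: "g \<in> carrier G"
    have "bij_betw (\<lambda>C. g <# C) (lcosets H) (lcosets H)"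
    proof (rule bij_betwI[where g="\<lambda>C. inv g <# C"])
      show "(\<lambda>C. g <# C) \<in> lcosets H \<rightarrow> lcosets H" using cl g by auto
      show "(\<lambda>C. inv g <# C) \<in> lcosets H \<rightarrow> lcosets H" using cl g by auto
      fix C assume C: "C \<in> lcosets H"
      show "inv g <# (g <# C) = C" using lcos_m_assoc[OF lc[OF C]] g lcos_mult_one[OF lc[OF C]] by simp
      show "g <# (inv g <# C) = C" using lcos_m_assoc[OF lc[OF C]] g lcos_mult_one[OF lc[OF C]] by simp
    qed
    then show "coset_action G H g \<in> Bij (lcosets H)"
      unfolding Bij_def coset_action_def by (simp add: bij_betw_restrict_eq)
  qed
  show ?thesis
  proof (intro group_hom.intro group_hom_axioms.intro homI)
    show "group G" by (rule is_group)
    show "group (BijGroup (lcosets H))" by (rule group_BijGroup)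
    fix x assume "x \<in> carrier G" then show "coset_action G H x \<in> carrier (BijGroup (lcosets H))"
      using bij by (simp add: BijGroup_def)
  next
    fix x y assume x: "x \<in> carrier G" and y: "y \<in> carrier G"
    have "coset_action G H (x \<otimes> y) = compose (lcosets H) (coset_action G H x) (coset_action G H y)"
      unfolding coset_action_def compose_def
      by (rule ext) (auto simp: cl x y lcos_m_assoc[OF lc])
    then show "coset_action G H (x \<otimes> y) = coset_action G H x \<otimes>\<^bsub>BijGroup (lcosets H)\<^esub> coset_action G H y"
      using bij x y by (simp add: BijGroup_def)
  qed
qed

lemma (in group) lcos_self_eq:
  assumes H: "subgroup H G" and g: "g \<in> carrier G"
  shows "g <# H = H \<longleftrightarrow> g \<in> H"
proof
  assume "g <# H = H" then show "g \<in> H" using lcos_self[OF g H] by simp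
next
  assume gH: "g \<in> H"
  show "g <# H = H"
  proof
    show "g <# H \<subseteq> H" using gH H by (auto simp: l_coset_def subgroup.m_closed)
    show "H \<subseteq> g <# H"
    proof
      fix h assume h: "h \<in> H"
      have "h = g \<otimes> (inv g \<otimes> h)" using h gH H g
        by (metis inv_solve_left' m_closed inv_closed subgroup.mem_carrier)
      moreover have "inv g \<otimes> h \<in> H" using h gH H by (simp add: subgroup.m_closed subgroup.m_inv_closed)
      ultimately show "h \<in> g <# H" by (auto simp: l_coset_def)
    qed
  qed
qed

lemma (in group) coset_stabilizer:
  assumes H: "subgroup H G"
  shows "stabilizer G (coset_action G H) H = H"
proof -
  have "H \<in> lcosets H" using lcos_mult_one[OF subgroup.subset[OF H]] by (auto simp: LCOSETS_def)
  then show ?thesis using lcos_self_eq[OF H] subgroup.subset[OF H]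
    by (auto simp: stabilizer_def coset_action_def)
qed



lemma bprod_mem[simp]: "((a,b),s) \<in> bprod P Q \<longleftrightarrow> a \<in> P \<and> b \<in> Q \<and> s = False"
  by (auto simp: bprod_def)

lemma base2_eq: "base2 T = bprod (carrier T) (carrier T)"
  by (auto simp: base2_def bprod_def)

locale wr = T: group T for T :: "'a monoid" (structure)
begin

sublocale W: group "wreath2 T" using wr_group T.is_group .

lemma bprod_subgroup:
  assumes P: "subgroup P T" and Q: "subgroup Q T"
  shows "subgroup (bprod P Q) (wreath2 T)"
proof (rule W.subgroupI)
  show "bprod P Q \<subseteq> carrier (wreath2 T)"
    using subgroup.subset[OF P] subgroup.subset[OF Q] by (auto simp: bprod_def)
  show "bprod P Q \<noteq> {}" using subgroup.one_closed[OF P] subgroup.one_closed[OF Q]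
    by (auto simp: bprod_def)
  fix x assume "x \<in> bprod P Q"
  then obtain a b where x: "x = ((a,b),False)" "a \<in> P" "b \<in> Q" by (auto simp: bprod_def)
  then show "inv\<^bsub>wreath2 T\<^esub> x \<in> bprod P Q"
    using P Q by (simp add: subgroup.mem_carrier subgroup.m_inv_closed)
next
  fix x y assume "x \<in> bprod P Q" "y \<in> bprod P Q"
  then obtain a b c d where "x = ((a,b),False)" "a \<in> P" "b \<in> Q" "y = ((c,d),False)" "c \<in> P" "d \<in> Q"
    by (auto simp: bprod_def)
  then show "x \<otimes>\<^bsub>wreath2 T\<^esub> y \<in> bprod P Q"
    using P Q by (simp add: subgroup.m_closed)
qed

lemma set_mult_I: "h \<in> U \<Longrightarrow> k \<in> V \<Longrightarrow> x = h \<otimes>\<^bsub>G\<^esub> k \<Longrightarrow> x \<in> U <#>\<^bsub>G\<^esub> V"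
  by (auto simp: set_mult_def)

lemma H_eq:
  assumes "U \<subseteq> carrier T" "V \<subseteq> carrier T"
  shows "bprod U V <#>\<^bsub>wreath2 T\<^esub> {\<one>\<^bsub>wreath2 T\<^esub>, swap2 T} = (U \<times> V) \<times> UNIV"
proof
  show "bprod U V <#>\<^bsub>wreath2 T\<^esub> {\<one>\<^bsub>wreath2 T\<^esub>, swap2 T} \<subseteq> (U \<times> V) \<times> UNIV"
  proof
    fix x assume "x \<in> bprod U V <#>\<^bsub>wreath2 T\<^esub> {\<one>\<^bsub>wreath2 T\<^esub>, swap2 T}"
    then obtain h k where hk: "h \<in> bprod U V" "k \<in> {\<one>\<^bsub>wreath2 T\<^esub>, swap2 T}" "x = h \<otimes>\<^bsub>wreath2 T\<^esub> k"
      unfolding set_mult_def by blast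
    then obtain a b where h: "h = ((a,b),False)" "a \<in> U" "b \<in> V" unfolding bprod_def by blast
    have c: "a \<in> carrier T" "b \<in> carrier T" using h assms by auto
    show "x \<in> (U \<times> V) \<times> UNIV"
      using hk(2) proof
      assume "k = \<one>\<^bsub>wreath2 T\<^esub>" then show ?thesis using hk h c by simp
    next
      assume "k \<in> {swap2 T}" then show ?thesis using hk h c by (simp add: swap2_def)
    qed
  qed
  show "(U \<times> V) \<times> UNIV \<subseteq> bprod U V <#>\<^bsub>wreath2 T\<^esub> {\<one>\<^bsub>wreath2 T\<^esub>, swap2 T}"
  proof
    fix x assume "x \<in> (U \<times> V) \<times> (UNIV :: bool set)"
    then obtain a b s where x: "x = ((a,b),s)" "a \<in> U" "b \<in> V" by auto
    have c: "a \<in> carrier T" "b \<in> carrier T" using x assms by auto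
    have m: "((a,b),False) \<in> bprod U V" using x by simp
    show "x \<in> bprod U V <#>\<^bsub>wreath2 T\<^esub> {\<one>\<^bsub>wreath2 T\<^esub>, swap2 T}"
    proof (cases s)
      case True
      then show ?thesis using x c by (intro set_mult_I[OF m, of "swap2 T"]) (auto simp: swap2_def)
    next
      case False
      then show ?thesis using x c by (intro set_mult_I[OF m, of "\<one>\<^bsub>wreath2 T\<^esub>"]) auto
    qed
  qed
qed
lemma full_subgroup:
  assumes U: "subgroup U T"
  shows "subgroup ((U \<times> U) \<times> (UNIV :: bool set)) (wreath2 T)"
proof (rule W.subgroupI)
  show "(U \<times> U) \<times> (UNIV :: bool set) \<subseteq> carrier (wreath2 T)"
    using subgroup.subset[OF U] by auto
  show "(U \<times> U) \<times> (UNIV :: bool set) \<noteq> {}" using subgroup.one_closed[OF U] by auto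
  fix x assume "x \<in> (U \<times> U) \<times> (UNIV :: bool set)"
  then obtain a b s where x: "x = ((a,b),s)" "a \<in> U" "b \<in> U" by auto
  then show "inv\<^bsub>wreath2 T\<^esub> x \<in> (U \<times> U) \<times> (UNIV :: bool set)"
    using U by (simp add: subgroup.mem_carrier subgroup.m_inv_closed)
next
  fix x y assume "x \<in> (U \<times> U) \<times> (UNIV :: bool set)" "y \<in> (U \<times> U) \<times> (UNIV :: bool set)"
  then obtain a b c d s t where "x = ((a,b),s)" "a \<in> U" "b \<in> U" "y = ((c,d),t)" "c \<in> U" "d \<in> U"
    by auto
  then show "x \<otimes>\<^bsub>wreath2 T\<^esub> y \<in> (U \<times> U) \<times> (UNIV :: bool set)"
    using U by (simp add: subgroup.m_closed)
qed

lemma M_subgroup: "subgroup (base2 T) (wreath2 T)"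
  unfolding base2_eq by (intro bprod_subgroup T.subgroup_self)

lemma M_normal_W: "base2 T \<lhd> wreath2 T"
proof -
  have "\<forall>x\<in>carrier (wreath2 T). \<forall>h\<in>base2 T. x \<otimes>\<^bsub>wreath2 T\<^esub> h \<otimes>\<^bsub>wreath2 T\<^esub> inv\<^bsub>wreath2 T\<^esub> x \<in> base2 T"
  proof (intro ballI)
    fix x h assume x: "x \<in> carrier (wreath2 T)" and h: "h \<in> base2 T"
    obtain a b s where xe: "x = ((a,b),s)" "a \<in> carrier T" "b \<in> carrier T" using x by auto
    obtain c d where he: "h = ((c,d),False)" "c \<in> carrier T" "d \<in> carrier T" using h by (auto simp: base2_def)
    show "x \<otimes>\<^bsub>wreath2 T\<^esub> h \<otimes>\<^bsub>wreath2 T\<^esub> inv\<^bsub>wreath2 T\<^esub> x \<in> base2 T"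
      using xe he by (cases s) (auto simp: base2_def)
  qed
  then show ?thesis using W.normal_inv_iff M_subgroup by blast
qed

end

locale wr2 = wr +
  fixes A B :: "'a set"
  assumes A: "subgroup A T" and B: "subgroup B T"
begin

definition "Hs = ((A \<inter> B) \<times> (A \<inter> B)) \<times> (UNIV :: bool set)"

lemma C_sub: "subgroup (A \<inter> B) T" using T.subgroups_Inter_pair[OF A B] .

lemma Hs_sub: "subgroup Hs (wreath2 T)" unfolding Hs_def by (rule full_subgroup[OF C_sub])

lemma K12: "bprod A B \<inter> bprod B A = bprod (A \<inter> B) (A \<inter> B)"
  by (auto simp: bprod_def)

lemma H_is_Hs: "(bprod A B \<inter> bprod B A) <#>\<^bsub>wreath2 T\<^esub> {\<one>\<^bsub>wreath2 T\<^esub>, swap2 T} = Hs"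
  unfolding K12 Hs_def using subgroup.subset[OF A] subgroup.subset[OF B] by (intro H_eq) auto

lemma swap_Hs: "swap2 T \<in> Hs"
  using subgroup.one_closed[OF C_sub] by (simp add: Hs_def swap2_def)

lemma coset_rep:
  assumes "Cs \<in> lcosets\<^bsub>wreath2 T\<^esub> Hs"
  shows "\<exists>m\<in>base2 T. Cs = m <#\<^bsub>wreath2 T\<^esub> Hs"
proof -
  obtain g where g: "g \<in> carrier (wreath2 T)" "Cs = g <#\<^bsub>wreath2 T\<^esub> Hs"
    using assms unfolding LCOSETS_def by blast
  obtain x y s where xe: "g = ((x,y),s)" "x \<in> carrier T" "y \<in> carrier T" using g by auto
  show ?thesis
  proof (cases s)
    case False
    then show ?thesis using g xe by (auto simp: base2_def)
  next
    case True
    let ?m = "((x,y),False)"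
    have m: "?m \<in> base2 T" using xe by (simp add: base2_def)
    have "g = ?m \<otimes>\<^bsub>wreath2 T\<^esub> swap2 T" using xe True by (simp add: swap2_def)
    then have "Cs = ?m <#\<^bsub>wreath2 T\<^esub> (swap2 T <#\<^bsub>wreath2 T\<^esub> Hs)"
      using g W.lcos_m_assoc[OF subgroup.subset[OF Hs_sub], of ?m "swap2 T"] xe
      by (simp add: swap2_def)
    also have "swap2 T <#\<^bsub>wreath2 T\<^esub> Hs = Hs"
      using W.lcos_self_eq[OF Hs_sub] swap_Hs subgroup.subset[OF Hs_sub] by blast
    finally show ?thesis using m by blast
  qed
qed

lemma trans_M: "transitive_on (base2 T) (lcosets\<^bsub>wreath2 T\<^esub> Hs) (coset_action (wreath2 T) Hs)"
  unfolding transitive_on_def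
proof (intro ballI)
  fix Cx Cy assume cx: "Cx \<in> lcosets\<^bsub>wreath2 T\<^esub> Hs" and cy: "Cy \<in> lcosets\<^bsub>wreath2 T\<^esub> Hs"
  obtain m1 where m1: "m1 \<in> base2 T" "Cx = m1 <#\<^bsub>wreath2 T\<^esub> Hs" using coset_rep[OF cx] by blast
  obtain m2 where m2: "m2 \<in> base2 T" "Cy = m2 <#\<^bsub>wreath2 T\<^esub> Hs" using coset_rep[OF cy] by blast
  have c1: "m1 \<in> carrier (wreath2 T)" and c2: "m2 \<in> carrier (wreath2 T)"
    using m1 m2 subgroup.subset[OF M_subgroup] by auto
  let ?n = "m2 \<otimes>\<^bsub>wreath2 T\<^esub> inv\<^bsub>wreath2 T\<^esub> m1"
  have n: "?n \<in> base2 T" using m1 m2 M_subgroup by (simp add: subgroup.m_closed subgroup.m_inv_closed)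
  have "coset_action (wreath2 T) Hs ?n Cx = ?n <#\<^bsub>wreath2 T\<^esub> Cx"
    using cx by (simp add: coset_action_def)
  also have "\<dots> = (?n \<otimes>\<^bsub>wreath2 T\<^esub> m1) <#\<^bsub>wreath2 T\<^esub> Hs"
    using m1 W.lcos_m_assoc[OF subgroup.subset[OF Hs_sub] _ c1, of ?n] c1 c2 W.m_closed W.inv_closed by simp
  also have "?n \<otimes>\<^bsub>wreath2 T\<^esub> m1 = m2"
    using W.m_assoc[OF c2 W.inv_closed[OF c1] c1] W.l_inv[OF c1] W.r_one[OF c2] by simp
  finally show "\<exists>n\<in>base2 T. coset_action (wreath2 T) Hs n Cx = Cy" using n m2 by blast
qed

lemma trans_W: "transitive_action (wreath2 T) (lcosets\<^bsub>wreath2 T\<^esub> Hs) (coset_action (wreath2 T) Hs)"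
proof (intro transitive_action.intro transitive_action_axioms.intro group_action.intro)
  show "group_hom (wreath2 T) (BijGroup (lcosets\<^bsub>wreath2 T\<^esub> Hs)) (coset_action (wreath2 T) Hs)"
    by (rule W.coset_action_hom[OF Hs_sub])
  fix x y assume "x \<in> lcosets\<^bsub>wreath2 T\<^esub> Hs" "y \<in> lcosets\<^bsub>wreath2 T\<^esub> Hs"
  then show "\<exists>g\<in>carrier (wreath2 T). coset_action (wreath2 T) Hs g x = y"
    using trans_M subgroup.subset[OF M_subgroup] unfolding transitive_on_def by blast
qed

lemma stab_Hs: "stabilizer (wreath2 T) (coset_action (wreath2 T) Hs) Hs = Hs"
  by (rule W.coset_stabilizer[OF Hs_sub])


lemma bprod_mult:
  "bprod P Q <#>\<^bsub>wreath2 T\<^esub> bprod P' Q' = bprod (P <#>\<^bsub>T\<^esub> P') (Q <#>\<^bsub>T\<^esub> Q')"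
proof
  show "bprod P Q <#>\<^bsub>wreath2 T\<^esub> bprod P' Q' \<subseteq> bprod (P <#>\<^bsub>T\<^esub> P') (Q <#>\<^bsub>T\<^esub> Q')"
  proof
    fix x assume "x \<in> bprod P Q <#>\<^bsub>wreath2 T\<^esub> bprod P' Q'"
    then obtain h k where hk: "h \<in> bprod P Q" "k \<in> bprod P' Q'" "x = h \<otimes>\<^bsub>wreath2 T\<^esub> k"
      unfolding set_mult_def by blast
    obtain a b where h: "h = ((a,b),False)" "a \<in> P" "b \<in> Q" using hk(1) unfolding bprod_def by blast
    obtain c d where k: "k = ((c,d),False)" "c \<in> P'" "d \<in> Q'" using hk(2) unfolding bprod_def by blast
    have "a \<otimes>\<^bsub>T\<^esub> c \<in> P <#>\<^bsub>T\<^esub> P'" using h k by (intro set_mult_I) auto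
    moreover have "b \<otimes>\<^bsub>T\<^esub> d \<in> Q <#>\<^bsub>T\<^esub> Q'" using h k by (intro set_mult_I) auto
    ultimately show "x \<in> bprod (P <#>\<^bsub>T\<^esub> P') (Q <#>\<^bsub>T\<^esub> Q')" using hk h k by simp
  qed
  show "bprod (P <#>\<^bsub>T\<^esub> P') (Q <#>\<^bsub>T\<^esub> Q') \<subseteq> bprod P Q <#>\<^bsub>wreath2 T\<^esub> bprod P' Q'"
  proof
    fix x assume "x \<in> bprod (P <#>\<^bsub>T\<^esub> P') (Q <#>\<^bsub>T\<^esub> Q')"
    then obtain u v where x: "x = ((u,v),False)" "u \<in> P <#>\<^bsub>T\<^esub> P'" "v \<in> Q <#>\<^bsub>T\<^esub> Q'"
      unfolding bprod_def by blast
    obtain a c where ac: "a \<in> P" "c \<in> P'" "u = a \<otimes>\<^bsub>T\<^esub> c" using x(2) unfolding set_mult_def by blast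
    obtain b d where bd: "b \<in> Q" "d \<in> Q'" "v = b \<otimes>\<^bsub>T\<^esub> d" using x(3) unfolding set_mult_def by blast
    show "x \<in> bprod P Q <#>\<^bsub>wreath2 T\<^esub> bprod P' Q'"
      by (rule set_mult_I[of "((a,b),False)" _ "((c,d),False)"]) (use x ac bd in auto)
  qed
qed

lemma (in group) conj_img:
  assumes g: "g \<in> carrier G" and U: "U \<subseteq> carrier G" and V: "V \<subseteq> carrier G"
    and s1: "(\<lambda>k. g \<otimes> k \<otimes> inv g) ` U \<subseteq> V"
    and s2: "(\<lambda>k. inv g \<otimes> k \<otimes> inv (inv g)) ` V \<subseteq> U"
  shows "(\<lambda>k. g \<otimes> k \<otimes> inv g) ` U = V"
proof
  show "V \<subseteq> (\<lambda>k. g \<otimes> k \<otimes> inv g) ` U"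
  proof
    fix v assume v: "v \<in> V"
    have vc: "v \<in> carrier G" using v V by auto
    have "g \<otimes> (inv g \<otimes> v \<otimes> inv (inv g)) \<otimes> inv g = v"
      using g vc by (simp add: m_assoc flip: m_assoc[of g "inv g"])
    moreover have "inv g \<otimes> v \<otimes> inv (inv g) \<in> U" using s2 v by auto
    ultimately show "v \<in> (\<lambda>k. g \<otimes> k \<otimes> inv g) ` U" by (metis image_eqI)
  qed
qed (rule s1)

lemma conj_sub:
  assumes P: "subgroup P T" and Q: "subgroup Q T" and CP: "A \<inter> B \<subseteq> P" and CQ: "A \<inter> B \<subseteq> Q"
    and g: "g \<in> Hs"
  shows "(\<lambda>k. g \<otimes>\<^bsub>wreath2 T\<^esub> k \<otimes>\<^bsub>wreath2 T\<^esub> inv\<^bsub>wreath2 T\<^esub> g) ` bprod P Q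
     \<subseteq> (if snd g then bprod Q P else bprod P Q)"
proof
  fix y assume "y \<in> (\<lambda>k. g \<otimes>\<^bsub>wreath2 T\<^esub> k \<otimes>\<^bsub>wreath2 T\<^esub> inv\<^bsub>wreath2 T\<^esub> g) ` bprod P Q"
  then obtain k where k: "k \<in> bprod P Q" "y = g \<otimes>\<^bsub>wreath2 T\<^esub> k \<otimes>\<^bsub>wreath2 T\<^esub> inv\<^bsub>wreath2 T\<^esub> g"
    by blast
  obtain p q where kk: "k = ((p,q),False)" "p \<in> P" "q \<in> Q" using k(1) unfolding bprod_def by blast
  obtain c d s where gg: "g = ((c,d),s)" "c \<in> A \<inter> B" "d \<in> A \<inter> B" using g unfolding Hs_def by blast
  have cP: "c \<in> P" "d \<in> P" "c \<in> Q" "d \<in> Q" using gg CP CQ by auto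
  have car: "c \<in> carrier T" "d \<in> carrier T" "p \<in> carrier T" "q \<in> carrier T"
    using cP kk subgroup.subset[OF P] subgroup.subset[OF Q] by auto
  show "y \<in> (if snd g then bprod Q P else bprod P Q)"
  proof (cases s)
    case True
    have "y = ((c \<otimes>\<^bsub>T\<^esub> q \<otimes>\<^bsub>T\<^esub> inv\<^bsub>T\<^esub> c, d \<otimes>\<^bsub>T\<^esub> p \<otimes>\<^bsub>T\<^esub> inv\<^bsub>T\<^esub> d), False)"
      using k kk gg True car by simp
    moreover have "c \<otimes>\<^bsub>T\<^esub> q \<otimes>\<^bsub>T\<^esub> inv\<^bsub>T\<^esub> c \<in> Q" "d \<otimes>\<^bsub>T\<^esub> p \<otimes>\<^bsub>T\<^esub> inv\<^bsub>T\<^esub> d \<in> P"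
      using cP kk P Q by (simp_all add: subgroup.m_closed subgroup.m_inv_closed)
    ultimately show ?thesis using gg True by simp
  next
    case False
    have "y = ((c \<otimes>\<^bsub>T\<^esub> p \<otimes>\<^bsub>T\<^esub> inv\<^bsub>T\<^esub> c, d \<otimes>\<^bsub>T\<^esub> q \<otimes>\<^bsub>T\<^esub> inv\<^bsub>T\<^esub> d), False)"
      using k kk gg False car by simp
    moreover have "c \<otimes>\<^bsub>T\<^esub> p \<otimes>\<^bsub>T\<^esub> inv\<^bsub>T\<^esub> c \<in> P" "d \<otimes>\<^bsub>T\<^esub> q \<otimes>\<^bsub>T\<^esub> inv\<^bsub>T\<^esub> d \<in> Q"
      using cP kk P Q by (simp_all add: subgroup.m_closed subgroup.m_inv_closed)
    ultimately show ?thesis using gg False by simp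
  qed
qed

lemma inv_Hs: "g \<in> Hs \<Longrightarrow> inv\<^bsub>wreath2 T\<^esub> g \<in> Hs \<and> snd (inv\<^bsub>wreath2 T\<^esub> g) = snd g"
proof -
  assume g: "g \<in> Hs"
  obtain c d s where gg: "g = ((c,d),s)" "c \<in> A \<inter> B" "d \<in> A \<inter> B" using g unfolding Hs_def by blast
  have "c \<in> carrier T" "d \<in> carrier T" using gg subgroup.subset[OF A] by auto
  then show ?thesis using gg g subgroup.m_inv_closed[OF Hs_sub g] by simp
qed

lemma conj_eq:
  assumes P: "subgroup P T" and Q: "subgroup Q T" and CP: "A \<inter> B \<subseteq> P" and CQ: "A \<inter> B \<subseteq> Q"
    and g: "g \<in> Hs"
  shows "(\<lambda>k. g \<otimes>\<^bsub>wreath2 T\<^esub> k \<otimes>\<^bsub>wreath2 T\<^esub> inv\<^bsub>wreath2 T\<^esub> g) ` bprod P Q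
     = (if snd g then bprod Q P else bprod P Q)"
proof (rule W.conj_img)
  show gc: "g \<in> carrier (wreath2 T)" using g subgroup.subset[OF Hs_sub] by blast
  show "bprod P Q \<subseteq> carrier (wreath2 T)" "(if snd g then bprod Q P else bprod P Q) \<subseteq> carrier (wreath2 T)"
    using subgroup.subset[OF bprod_subgroup[OF P Q]] subgroup.subset[OF bprod_subgroup[OF Q P]] by auto
  show "(\<lambda>k. g \<otimes>\<^bsub>wreath2 T\<^esub> k \<otimes>\<^bsub>wreath2 T\<^esub> inv\<^bsub>wreath2 T\<^esub> g) ` bprod P Q
     \<subseteq> (if snd g then bprod Q P else bprod P Q)" by (rule conj_sub[OF P Q CP CQ g])
  have ig: "inv\<^bsub>wreath2 T\<^esub> g \<in> Hs" "snd (inv\<^bsub>wreath2 T\<^esub> g) = snd g" using inv_Hs[OF g] by auto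
  show "(\<lambda>k. inv\<^bsub>wreath2 T\<^esub> g \<otimes>\<^bsub>wreath2 T\<^esub> k \<otimes>\<^bsub>wreath2 T\<^esub> inv\<^bsub>wreath2 T\<^esub> (inv\<^bsub>wreath2 T\<^esub> g)) `
     (if snd g then bprod Q P else bprod P Q) \<subseteq> bprod P Q"
    using conj_sub[OF Q P CQ CP ig(1)] conj_sub[OF P Q CP CQ ig(1)] ig(2) by (cases "snd g") auto
qed


lemma img1: "Q \<noteq> {} \<Longrightarrow> (\<lambda>x :: ('a \<times> 'a) \<times> bool. fst (fst x)) ` bprod P Q = P"
proof -
  assume "Q \<noteq> {}" then obtain q where q: "q \<in> Q" by blast
  show ?thesis
  proof
    show "(\<lambda>x :: ('a \<times> 'a) \<times> bool. fst (fst x)) ` bprod P Q \<subseteq> P" unfolding bprod_def by force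
    show "P \<subseteq> (\<lambda>x :: ('a \<times> 'a) \<times> bool. fst (fst x)) ` bprod P Q"
    proof
      fix p assume "p \<in> P"
      then have "((p,q),False) \<in> bprod P Q" using q by simp
      then show "p \<in> (\<lambda>x :: ('a \<times> 'a) \<times> bool. fst (fst x)) ` bprod P Q" by (rule rev_image_eqI) simp
    qed
  qed
qed
lemma img2: "P \<noteq> {} \<Longrightarrow> (\<lambda>x :: ('a \<times> 'a) \<times> bool. snd (fst x)) ` bprod P Q = Q"
proof -
  assume "P \<noteq> {}" then obtain p where p: "p \<in> P" by blast
  show ?thesis
  proof
    show "(\<lambda>x :: ('a \<times> 'a) \<times> bool. snd (fst x)) ` bprod P Q \<subseteq> Q" unfolding bprod_def by force
    show "Q \<subseteq> (\<lambda>x :: ('a \<times> 'a) \<times> bool. snd (fst x)) ` bprod P Q"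
    proof
      fix q assume "q \<in> Q"
      then have "((p,q),False) \<in> bprod P Q" using p by simp
      then show "q \<in> (\<lambda>x :: ('a \<times> 'a) \<times> bool. snd (fst x)) ` bprod P Q" by (rule rev_image_eqI) simp
    qed
  qed
qed

lemma bprod_neq: "P \<noteq> {} \<Longrightarrow> Q \<noteq> {} \<Longrightarrow> P \<noteq> Q \<Longrightarrow> bprod P Q \<noteq> bprod Q (P :: 'a set)"
proof
  assume ne: "P \<noteq> {}" "Q \<noteq> {}" "P \<noteq> Q" and e: "bprod P Q = bprod Q P"
  have "(\<lambda>x. fst (fst x)) ` bprod P Q = (\<lambda>x. fst (fst x)) ` bprod Q P"
    using e by simp
  then show False using img1[OF ne(2), of P] img1[OF ne(1), of Q] ne(3) by simp
qed

lemma M_Hs: "base2 T \<inter> Hs = bprod (A \<inter> B) (A \<inter> B)"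
proof -
  have "carrier T \<inter> (A \<inter> B) = A \<inter> B" using subgroup.subset[OF A] by blast
  then show ?thesis by (simp add: base2_def Hs_def bprod_def Times_Int_Times)
qed

lemma cart:
  assumes P: "subgroup P T" and Q: "subgroup Q T" and CP: "A \<inter> B \<subseteq> P" and CQ: "A \<inter> B \<subseteq> Q"
    and PQ: "P \<inter> Q = A \<inter> B" and PQ1: "P <#>\<^bsub>T\<^esub> Q = carrier T" and QP1: "Q <#>\<^bsub>T\<^esub> P = carrier T"
    and neq: "P \<noteq> Q"
  shows "cartesian_system (wreath2 T) (coset_action (wreath2 T) Hs) (base2 T) Hs {bprod P Q, bprod Q P}"
  unfolding cartesian_system_def stab_Hs
proof (intro conjI ballI)
  have ne: "P \<noteq> {}" "Q \<noteq> {}" using subgroup.one_closed[OF P] subgroup.one_closed[OF Q] by auto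
  have kn: "bprod P Q \<noteq> bprod Q P" by (rule bprod_neq[OF ne neq])
  show "finite {bprod P Q, bprod Q P}" "{bprod P Q, bprod Q P} \<noteq> {}" by auto
  fix K assume K: "K \<in> {bprod P Q, bprod Q P}"
  then show "subgroup K (wreath2 T)" using bprod_subgroup[OF P Q] bprod_subgroup[OF Q P] by auto
  show "K \<subseteq> base2 T" using K subgroup.subset[OF P] subgroup.subset[OF Q]
    by (auto simp: base2_def bprod_def)
  have m1: "bprod P Q <#>\<^bsub>wreath2 T\<^esub> bprod Q P = base2 T"
    using PQ1 QP1 by (simp add: bprod_mult base2_eq)
  have m2: "bprod Q P <#>\<^bsub>wreath2 T\<^esub> bprod P Q = base2 T"
    using PQ1 QP1 by (simp add: bprod_mult base2_eq)
  have s1: "bprod P Q \<subseteq> base2 T" "bprod Q P \<subseteq> base2 T" using subgroup.subset[OF P] subgroup.subset[OF Q]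
    by (auto simp: base2_def bprod_def)
  show "K <#>\<^bsub>wreath2 T\<^esub> (base2 T \<inter> \<Inter> ({bprod P Q, bprod Q P} - {K})) = base2 T"
  proof (cases "K = bprod P Q")
    case True
    then have "{bprod P Q, bprod Q P} - {K} = {bprod Q P}" using kn by auto
    then show ?thesis using True m1 s1 by (simp add: Int_absorb1)
  next
    case False
    then have "K = bprod Q P" "{bprod P Q, bprod Q P} - {K} = {bprod P Q}" using K kn by auto
    then show ?thesis using m2 s1 by (simp add: Int_absorb1)
  qed
next
  fix g K assume g: "g \<in> Hs" and K: "K \<in> {bprod P Q, bprod Q P}"
  from K consider "K = bprod P Q" | "K = bprod Q P" by blast
  then show "(\<lambda>k. g \<otimes>\<^bsub>wreath2 T\<^esub> k \<otimes>\<^bsub>wreath2 T\<^esub> inv\<^bsub>wreath2 T\<^esub> g) ` K \<in> {bprod P Q, bprod Q P}"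
  proof cases
    case 1 then show ?thesis by (simp add: conj_eq[OF P Q CP CQ g])
  next
    case 2 then show ?thesis by (simp add: conj_eq[OF Q P CQ CP g])
  qed
next
  have "Q \<inter> P = A \<inter> B" using PQ by blast
  then show "\<Inter> {bprod P Q, bprod Q P} = base2 T \<inter> Hs"
    unfolding M_Hs using PQ by (simp add: bprod_def Times_Int_Times)
qed


lemma Ms_normal_iff:
  "N \<lhd> (wreath2 T)\<lparr>carrier := base2 T\<rparr> \<longleftrightarrow>
   subgroup N (wreath2 T) \<and> N \<subseteq> base2 T \<and>
   (\<forall>m\<in>base2 T. \<forall>h\<in>N. m \<otimes>\<^bsub>wreath2 T\<^esub> h \<otimes>\<^bsub>wreath2 T\<^esub> inv\<^bsub>wreath2 T\<^esub> m \<in> N)"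
proof -
  interpret Ms: group "(wreath2 T)\<lparr>carrier := base2 T\<rparr>"
    by (rule subgroup.subgroup_is_group[OF M_subgroup W.is_group])
  have sg: "subgroup N ((wreath2 T)\<lparr>carrier := base2 T\<rparr>) \<longleftrightarrow> subgroup N (wreath2 T) \<and> N \<subseteq> base2 T"
  proof
    assume a: "subgroup N ((wreath2 T)\<lparr>carrier := base2 T\<rparr>)"
    show "subgroup N (wreath2 T) \<and> N \<subseteq> base2 T"
      using W.incl_subgroup[OF M_subgroup a] subgroup.subset[OF a] by simp
  next
    assume "subgroup N (wreath2 T) \<and> N \<subseteq> base2 T"
    then show "subgroup N ((wreath2 T)\<lparr>carrier := base2 T\<rparr>)"
      using W.subgroup_incl[OF _ M_subgroup] by blast
  qed
  have inv: "\<And>m. m \<in> base2 T \<Longrightarrow> inv\<^bsub>(wreath2 T)\<lparr>carrier := base2 T\<rparr>\<^esub> m = inv\<^bsub>wreath2 T\<^esub> m"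
    by (rule W.m_inv_consistent[OF M_subgroup])
  show ?thesis unfolding Ms.normal_inv_iff sg using inv by auto
qed

lemma proj_normal1:
  assumes N: "subgroup N (wreath2 T)" "N \<subseteq> base2 T"
    "\<forall>m\<in>base2 T. \<forall>h\<in>N. m \<otimes>\<^bsub>wreath2 T\<^esub> h \<otimes>\<^bsub>wreath2 T\<^esub> inv\<^bsub>wreath2 T\<^esub> m \<in> N"
  shows "{a. \<exists>b. ((a,b),False) \<in> N} \<lhd> T"
  unfolding T.normal_inv_iff
proof (intro conjI ballI)
  show "subgroup {a. \<exists>b. ((a,b),False) \<in> N} T"
  proof (rule T.subgroupI)
    show "{a. \<exists>b. ((a,b),False) \<in> N} \<subseteq> carrier T" using N(2) by (auto simp: base2_def)
    have "((\<one>\<^bsub>T\<^esub>, \<one>\<^bsub>T\<^esub>), False) \<in> N" using subgroup.one_closed[OF N(1)] by simp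
    then show "{a. \<exists>b. ((a,b),False) \<in> N} \<noteq> {}" by blast
  next
    fix a assume "a \<in> {a. \<exists>b. ((a,b),False) \<in> N}"
    then obtain b where ab: "((a,b),False) \<in> N" by blast
    then have c: "a \<in> carrier T" "b \<in> carrier T" using N(2) by (auto simp: base2_def)
    have "inv\<^bsub>wreath2 T\<^esub> ((a,b),False) \<in> N" using subgroup.m_inv_closed[OF N(1) ab] .
    then show "inv\<^bsub>T\<^esub> a \<in> {a. \<exists>b. ((a,b),False) \<in> N}" using c by auto
  next
    fix a a' assume "a \<in> {a. \<exists>b. ((a,b),False) \<in> N}" "a' \<in> {a. \<exists>b. ((a,b),False) \<in> N}"
    then obtain b b' where ab: "((a,b),False) \<in> N" "((a',b'),False) \<in> N" by blast
    have "((a,b),False) \<otimes>\<^bsub>wreath2 T\<^esub> ((a',b'),False) \<in> N" using subgroup.m_closed[OF N(1) ab] .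
    then show "a \<otimes>\<^bsub>T\<^esub> a' \<in> {a. \<exists>b. ((a,b),False) \<in> N}" by auto
  qed
next
  fix t a assume t: "t \<in> carrier T" and "a \<in> {a. \<exists>b. ((a,b),False) \<in> N}"
  then obtain b where ab: "((a,b),False) \<in> N" by blast
  then have c: "a \<in> carrier T" "b \<in> carrier T" using N(2) by (auto simp: base2_def)
  have "((t, \<one>\<^bsub>T\<^esub>),False) \<in> base2 T" using t by (simp add: base2_def)
  then have "((t, \<one>\<^bsub>T\<^esub>),False) \<otimes>\<^bsub>wreath2 T\<^esub> ((a,b),False) \<otimes>\<^bsub>wreath2 T\<^esub> inv\<^bsub>wreath2 T\<^esub> ((t, \<one>\<^bsub>T\<^esub>),False) \<in> N"
    using N(3) ab by blast
  then show "t \<otimes>\<^bsub>T\<^esub> a \<otimes>\<^bsub>T\<^esub> inv\<^bsub>T\<^esub> t \<in> {a. \<exists>b. ((a,b),False) \<in> N}" using t c by auto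
qed

lemma proj_normal2:
  assumes N: "subgroup N (wreath2 T)" "N \<subseteq> base2 T"
    "\<forall>m\<in>base2 T. \<forall>h\<in>N. m \<otimes>\<^bsub>wreath2 T\<^esub> h \<otimes>\<^bsub>wreath2 T\<^esub> inv\<^bsub>wreath2 T\<^esub> m \<in> N"
  shows "{b. \<exists>a. ((a,b),False) \<in> N} \<lhd> T"
  unfolding T.normal_inv_iff
proof (intro conjI ballI)
  show "subgroup {b. \<exists>a. ((a,b),False) \<in> N} T"
  proof (rule T.subgroupI)
    show "{b. \<exists>a. ((a,b),False) \<in> N} \<subseteq> carrier T" using N(2) by (auto simp: base2_def)
    have "((\<one>\<^bsub>T\<^esub>, \<one>\<^bsub>T\<^esub>), False) \<in> N" using subgroup.one_closed[OF N(1)] by simp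
    then show "{b. \<exists>a. ((a,b),False) \<in> N} \<noteq> {}" by blast
  next
    fix b assume "b \<in> {b. \<exists>a. ((a,b),False) \<in> N}"
    then obtain a where ab: "((a,b),False) \<in> N" by blast
    then have c: "a \<in> carrier T" "b \<in> carrier T" using N(2) by (auto simp: base2_def)
    have "inv\<^bsub>wreath2 T\<^esub> ((a,b),False) \<in> N" using subgroup.m_inv_closed[OF N(1) ab] .
    then show "inv\<^bsub>T\<^esub> b \<in> {b. \<exists>a. ((a,b),False) \<in> N}" using c by auto
  next
    fix b b' assume "b \<in> {b. \<exists>a. ((a,b),False) \<in> N}" "b' \<in> {b. \<exists>a. ((a,b),False) \<in> N}"
    then obtain a a' where ab: "((a,b),False) \<in> N" "((a',b'),False) \<in> N" by blast
    have "((a,b),False) \<otimes>\<^bsub>wreath2 T\<^esub> ((a',b'),False) \<in> N" using subgroup.m_closed[OF N(1) ab] .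
    then show "b \<otimes>\<^bsub>T\<^esub> b' \<in> {b. \<exists>a. ((a,b),False) \<in> N}" by auto
  qed
next
  fix t b assume t: "t \<in> carrier T" and "b \<in> {b. \<exists>a. ((a,b),False) \<in> N}"
  then obtain a where ab: "((a,b),False) \<in> N" by blast
  then have c: "a \<in> carrier T" "b \<in> carrier T" using N(2) by (auto simp: base2_def)
  have "((\<one>\<^bsub>T\<^esub>, t),False) \<in> base2 T" using t by (simp add: base2_def)
  then have "((\<one>\<^bsub>T\<^esub>, t),False) \<otimes>\<^bsub>wreath2 T\<^esub> ((a,b),False) \<otimes>\<^bsub>wreath2 T\<^esub> inv\<^bsub>wreath2 T\<^esub> ((\<one>\<^bsub>T\<^esub>, t),False) \<in> N"
    using N(3) ab by blast
  then show "t \<otimes>\<^bsub>T\<^esub> b \<otimes>\<^bsub>T\<^esub> inv\<^bsub>T\<^esub> t \<in> {b. \<exists>a. ((a,b),False) \<in> N}" using t c by auto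
qed

lemma normal_in_proper:
  assumes S: "simple_group T" and N: "N \<lhd> (wreath2 T)\<lparr>carrier := base2 T\<rparr>"
    and P: "P \<noteq> carrier T" and Q: "Q \<noteq> carrier T" and Pc: "P \<subseteq> carrier T" and Qc: "Q \<subseteq> carrier T" and NPQ: "N \<subseteq> bprod P Q"
  shows "N \<subseteq> {\<one>\<^bsub>wreath2 T\<^esub>}"
proof
  have N': "subgroup N (wreath2 T)" "N \<subseteq> base2 T"
    "\<forall>m\<in>base2 T. \<forall>h\<in>N. m \<otimes>\<^bsub>wreath2 T\<^esub> h \<otimes>\<^bsub>wreath2 T\<^esub> inv\<^bsub>wreath2 T\<^esub> m \<in> N"
    using N unfolding Ms_normal_iff by auto
  have s1: "{a. \<exists>b. ((a,b),False) \<in> N} \<subseteq> P" and s2: "{b. \<exists>a. ((a,b),False) \<in> N} \<subseteq> Q"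
    using NPQ by auto
  have "{a. \<exists>b. ((a,b),False) \<in> N} = carrier T \<or> {a. \<exists>b. ((a,b),False) \<in> N} = {\<one>\<^bsub>T\<^esub>}"
    by (rule simple_group.no_real_normal_subgroup[OF S proj_normal1[OF N']])
  then have e1: "{a. \<exists>b. ((a,b),False) \<in> N} = {\<one>\<^bsub>T\<^esub>}"
    using s1 P Pc by auto
  have "{b. \<exists>a. ((a,b),False) \<in> N} = carrier T \<or> {b. \<exists>a. ((a,b),False) \<in> N} = {\<one>\<^bsub>T\<^esub>}"
    by (rule simple_group.no_real_normal_subgroup[OF S proj_normal2[OF N']])
  then have e2: "{b. \<exists>a. ((a,b),False) \<in> N} = {\<one>\<^bsub>T\<^esub>}"
    using s2 Q Qc by auto
  fix x assume x: "x \<in> N"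
  then obtain a b where ab: "x = ((a,b),False)" using N'(2) unfolding base2_def by blast
  then have "a \<in> {a. \<exists>b. ((a,b),False) \<in> N}" "b \<in> {b. \<exists>a. ((a,b),False) \<in> N}" using x by auto
  then show "x \<in> {\<one>\<^bsub>wreath2 T\<^esub>}" using e1 e2 ab by simp
qed


lemma not_Mnormal:
  assumes S: "simple_group T" and An: "A \<noteq> carrier T" and Bn: "B \<noteq> carrier T" and AB: "A \<noteq> B"
  shows "\<not> M_normal (wreath2 T) (coset_action (wreath2 T) Hs) (base2 T) Hs {bprod A B, bprod B A}"
proof
  let ?K1 = "bprod A B" and ?K2 = "bprod B A"
  assume "M_normal (wreath2 T) (coset_action (wreath2 T) Hs) (base2 T) Hs {?K1, ?K2}"
  then obtain N where
    nn: "\<forall>K\<in>{?K1, ?K2}. N K \<subseteq> base2 T \<and> N K \<lhd> (wreath2 T)\<lparr>carrier := base2 T\<rparr>" and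
    gen: "generate (wreath2 T) (\<Union>K\<in>{?K1, ?K2}. N K) = base2 T" and
    kk: "\<forall>K\<in>{?K1, ?K2}. K = (N K \<inter> (base2 T \<inter> Hs)) <#>\<^bsub>wreath2 T\<^esub>
                       generate (wreath2 T) (\<Union>K'\<in>{?K1, ?K2} - {K}. N K')"
    unfolding M_normal_def stab_Hs by blast
  have Ac: "A \<subseteq> carrier T" and Bc: "B \<subseteq> carrier T" using subgroup.subset[OF A] subgroup.subset[OF B] by auto
  have ne: "A \<noteq> {}" "B \<noteq> {}" using subgroup.one_closed[OF A] subgroup.one_closed[OF B] by auto
  have kn: "?K1 \<noteq> ?K2" by (rule bprod_neq[OF ne AB])
  have d1: "{?K1, ?K2} - {?K1} = {?K2}" and d2: "{?K1, ?K2} - {?K2} = {?K1}" using kn by auto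
  have one_in: "\<one>\<^bsub>wreath2 T\<^esub> \<in> base2 T \<inter> Hs"
    using subgroup.one_closed[OF M_subgroup] subgroup.one_closed[OF Hs_sub] by blast
  have sub: "N K' \<subseteq> K" if "K \<in> {?K1, ?K2}" "K' \<in> {?K1, ?K2}" "{?K1, ?K2} - {K} = {K'}" for K K'
  proof
    fix x assume x: "x \<in> N K'"
    have nK: "N K \<lhd> (wreath2 T)\<lparr>carrier := base2 T\<rparr>" "N K' \<subseteq> base2 T" using nn that by auto
    have "\<one>\<^bsub>wreath2 T\<^esub> \<in> N K"
      using normal_imp_subgroup[OF nK(1)] subgroup.one_closed by fastforce
    then have o: "\<one>\<^bsub>wreath2 T\<^esub> \<in> N K \<inter> (base2 T \<inter> Hs)" using one_in by blast
    have xg: "x \<in> generate (wreath2 T) (\<Union>K'\<in>{?K1, ?K2} - {K}. N K')"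
      using x that(3) by (auto intro: generate.incl)
    have xc: "x \<in> carrier (wreath2 T)" using x nK(2) subgroup.subset[OF M_subgroup] by blast
    have "x \<in> (N K \<inter> (base2 T \<inter> Hs)) <#>\<^bsub>wreath2 T\<^esub> generate (wreath2 T) (\<Union>K'\<in>{?K1, ?K2} - {K}. N K')"
      by (rule set_mult_I[OF o xg]) (use xc in simp)
    then show "x \<in> K" using kk that(1) by blast
  qed
  have s1: "N ?K2 \<subseteq> ?K1" by (rule sub) (use d1 in auto)
  have s2: "N ?K1 \<subseteq> ?K2" by (rule sub) (use d2 in auto)
  have t1: "N ?K1 \<subseteq> {\<one>\<^bsub>wreath2 T\<^esub>}"
    by (rule normal_in_proper[OF S _ Bn An Bc Ac s2]) (use nn in auto)
  have t2: "N ?K2 \<subseteq> {\<one>\<^bsub>wreath2 T\<^esub>}"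
    by (rule normal_in_proper[OF S _ An Bn Ac Bc s1]) (use nn in auto)
  have "generate (wreath2 T) (\<Union>K\<in>{?K1, ?K2}. N K) \<subseteq> {\<one>\<^bsub>wreath2 T\<^esub>}"
    by (rule W.generate_subgroup_incl[OF _ W.triv_subgroup]) (use t1 t2 in auto)
  then have "base2 T \<subseteq> {\<one>\<^bsub>wreath2 T\<^esub>}" using gen by simp
  moreover obtain a where a: "a \<in> carrier T" "a \<noteq> \<one>\<^bsub>T\<^esub>" using An subgroup.one_closed[OF A] Ac by blast
  moreover have "((a, a), False) \<in> base2 T" using a by (simp add: base2_def)
  ultimately show False by auto
qed


lemma gen_eq: "subgroup U (wreath2 T) \<Longrightarrow> generate (wreath2 T) U = U"
  using W.generate_subgroup_incl[of U U] generate.incl[of _ U "wreath2 T"] by blast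

lemma one_T_sub: "subgroup {\<one>\<^bsub>T\<^esub>} T" by (rule T.triv_subgroup)

lemma factor_normal1: "bprod (carrier T) {\<one>\<^bsub>T\<^esub>} \<lhd> (wreath2 T)\<lparr>carrier := base2 T\<rparr>"
  unfolding Ms_normal_iff
proof (intro conjI ballI)
  show "subgroup (bprod (carrier T) {\<one>\<^bsub>T\<^esub>}) (wreath2 T)"
    by (rule bprod_subgroup[OF T.subgroup_self one_T_sub])
  show "bprod (carrier T) {\<one>\<^bsub>T\<^esub>} \<subseteq> base2 T" by (auto simp: base2_def bprod_def)
  fix m h assume m: "m \<in> base2 T" and h: "h \<in> bprod (carrier T) {\<one>\<^bsub>T\<^esub>}"
  obtain x y where mm: "m = ((x,y),False)" "x \<in> carrier T" "y \<in> carrier T" using m unfolding base2_def by blast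
  obtain a where hh: "h = ((a,\<one>\<^bsub>T\<^esub>),False)" "a \<in> carrier T" using h unfolding bprod_def by blast
  show "m \<otimes>\<^bsub>wreath2 T\<^esub> h \<otimes>\<^bsub>wreath2 T\<^esub> inv\<^bsub>wreath2 T\<^esub> m \<in> bprod (carrier T) {\<one>\<^bsub>T\<^esub>}"
    using mm hh by simp
qed

lemma factor_normal2: "bprod {\<one>\<^bsub>T\<^esub>} (carrier T) \<lhd> (wreath2 T)\<lparr>carrier := base2 T\<rparr>"
  unfolding Ms_normal_iff
proof (intro conjI ballI)
  show "subgroup (bprod {\<one>\<^bsub>T\<^esub>} (carrier T)) (wreath2 T)"
    by (rule bprod_subgroup[OF one_T_sub T.subgroup_self])
  show "bprod {\<one>\<^bsub>T\<^esub>} (carrier T) \<subseteq> base2 T" by (auto simp: base2_def bprod_def)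
  fix m h assume m: "m \<in> base2 T" and h: "h \<in> bprod {\<one>\<^bsub>T\<^esub>} (carrier T)"
  obtain x y where mm: "m = ((x,y),False)" "x \<in> carrier T" "y \<in> carrier T" using m unfolding base2_def by blast
  obtain a where hh: "h = ((\<one>\<^bsub>T\<^esub>,a),False)" "a \<in> carrier T" using h unfolding bprod_def by blast
  show "m \<otimes>\<^bsub>wreath2 T\<^esub> h \<otimes>\<^bsub>wreath2 T\<^esub> inv\<^bsub>wreath2 T\<^esub> m \<in> bprod {\<one>\<^bsub>T\<^esub>} (carrier T)"
    using mm hh by simp
qed

lemma gen_factors: "generate (wreath2 T) (bprod (carrier T) {\<one>\<^bsub>T\<^esub>} \<union> bprod {\<one>\<^bsub>T\<^esub>} (carrier T)) = base2 T"
proof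
  show "generate (wreath2 T) (bprod (carrier T) {\<one>\<^bsub>T\<^esub>} \<union> bprod {\<one>\<^bsub>T\<^esub>} (carrier T)) \<subseteq> base2 T"
    by (rule W.generate_subgroup_incl[OF _ M_subgroup]) (auto simp: base2_def bprod_def)
  show "base2 T \<subseteq> generate (wreath2 T) (bprod (carrier T) {\<one>\<^bsub>T\<^esub>} \<union> bprod {\<one>\<^bsub>T\<^esub>} (carrier T))"
  proof
    fix m assume m: "m \<in> base2 T"
    obtain x y where mm: "m = ((x,y),False)" "x \<in> carrier T" "y \<in> carrier T" using m unfolding base2_def by blast
    have "((x,\<one>\<^bsub>T\<^esub>),False) \<in> generate (wreath2 T) (bprod (carrier T) {\<one>\<^bsub>T\<^esub>} \<union> bprod {\<one>\<^bsub>T\<^esub>} (carrier T))"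
      using mm by (intro generate.incl) simp
    moreover have "((\<one>\<^bsub>T\<^esub>,y),False) \<in> generate (wreath2 T) (bprod (carrier T) {\<one>\<^bsub>T\<^esub>} \<union> bprod {\<one>\<^bsub>T\<^esub>} (carrier T))"
      using mm by (intro generate.incl) simp
    ultimately have "((x,\<one>\<^bsub>T\<^esub>),False) \<otimes>\<^bsub>wreath2 T\<^esub> ((\<one>\<^bsub>T\<^esub>,y),False) \<in> generate (wreath2 T) (bprod (carrier T) {\<one>\<^bsub>T\<^esub>} \<union> bprod {\<one>\<^bsub>T\<^esub>} (carrier T))"
      by (rule generate.eng)
    then show "m \<in> generate (wreath2 T) (bprod (carrier T) {\<one>\<^bsub>T\<^esub>} \<union> bprod {\<one>\<^bsub>T\<^esub>} (carrier T))"
      using mm by simp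
  qed
qed

lemma setmult_one_r: "U \<subseteq> carrier T \<Longrightarrow> U <#>\<^bsub>T\<^esub> {\<one>\<^bsub>T\<^esub>} = U"
  by (metis T.coset_mult_one r_coset_eq_set_mult)
lemma setmult_one_l: "U \<subseteq> carrier T \<Longrightarrow> {\<one>\<^bsub>T\<^esub>} <#>\<^bsub>T\<^esub> U = U"
  by (metis T.lcos_mult_one l_coset_eq_set_mult)

lemma Mnormal_b:
  assumes An: "A \<noteq> carrier T"
  shows "M_normal (wreath2 T) (coset_action (wreath2 T) Hs) (base2 T) Hs
          {bprod (A \<inter> B) (carrier T), bprod (carrier T) (A \<inter> B)}"
proof -
  let ?C = "A \<inter> B"
  let ?L1 = "bprod ?C (carrier T)" and ?L2 = "bprod (carrier T) ?C"
  let ?F1 = "bprod (carrier T) {\<one>\<^bsub>T\<^esub>}" and ?F2 = "bprod {\<one>\<^bsub>T\<^esub>} (carrier T)"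
  define N where "N = (\<lambda>K. if K = ?L1 then ?F1 else ?F2)"
  have Cc: "?C \<subseteq> carrier T" using subgroup.subset[OF A] by blast
  have Cn: "?C \<noteq> carrier T" using An subgroup.subset[OF A] by blast
  have ne: "?C \<noteq> {}" "carrier T \<noteq> {}" using subgroup.one_closed[OF C_sub] by auto
  have kn: "?L1 \<noteq> ?L2" by (rule bprod_neq[OF ne Cn])
  have N1: "N ?L1 = ?F1" and N2: "N ?L2 = ?F2" using kn by (auto simp: N_def)
  have d1: "{?L1, ?L2} - {?L1} = {?L2}" and d2: "{?L1, ?L2} - {?L2} = {?L1}" using kn by auto
  have g1: "generate (wreath2 T) ?F1 = ?F1" by (rule gen_eq[OF bprod_subgroup[OF T.subgroup_self one_T_sub]])
  have g2: "generate (wreath2 T) ?F2 = ?F2" by (rule gen_eq[OF bprod_subgroup[OF one_T_sub T.subgroup_self]])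
  have i12: "?F1 \<inter> ?F2 = {\<one>\<^bsub>wreath2 T\<^esub>}"
    unfolding bprod_def wr_one by blast
  have cc1: "carrier T \<inter> ?C = ?C" "?C \<inter> carrier T = ?C" using Cc by blast+
  have cc2: "{\<one>\<^bsub>T\<^esub>} \<inter> ?C = {\<one>\<^bsub>T\<^esub>}" "?C \<inter> {\<one>\<^bsub>T\<^esub>} = {\<one>\<^bsub>T\<^esub>}"
    using subgroup.one_closed[OF C_sub] by blast+
  have e1: "?F1 \<inter> (base2 T \<inter> Hs) = bprod ?C {\<one>\<^bsub>T\<^esub>}"
    unfolding M_Hs using cc1 cc2 by (simp add: bprod_def Times_Int_Times)
  have e2: "?F2 \<inter> (base2 T \<inter> Hs) = bprod {\<one>\<^bsub>T\<^esub>} ?C"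
    unfolding M_Hs using cc1 cc2 by (simp add: bprod_def Times_Int_Times)
  show ?thesis
    unfolding M_normal_def stab_Hs
  proof (intro exI[of _ N] conjI ballI)
    fix K assume K: "K \<in> {?L1, ?L2}"
    have "N K \<lhd> (wreath2 T)\<lparr>carrier := base2 T\<rparr>"
    proof (cases "K = ?L1")
      case True then show ?thesis using N1 factor_normal1 by simp
    next
      case False then show ?thesis using K N2 factor_normal2 by simp
    qed
    then show "N K \<lhd> (wreath2 T)\<lparr>carrier := base2 T\<rparr>" .
    then show "N K \<subseteq> base2 T" unfolding Ms_normal_iff by blast
  next
    have "(\<Union>K\<in>{?L1, ?L2}. N K) = ?F1 \<union> ?F2" using N1 N2 by simp
    then show "generate (wreath2 T) (\<Union>K\<in>{?L1, ?L2}. N K) = base2 T" using gen_factors by simp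
  next
    fix K assume K: "K \<in> {?L1, ?L2}"
    then consider "K = ?L1" | "K = ?L2" by blast
    then show "N K \<inter> generate (wreath2 T) (\<Union>K'\<in>{?L1, ?L2} - {K}. N K') = {\<one>\<^bsub>wreath2 T\<^esub>}"
    proof cases
      case 1 then show ?thesis using d1 N1 N2 g2 i12 by simp
    next
      case 2 then show ?thesis using d2 N1 N2 g1 i12 by (simp add: Int_commute)
    qed
    from K consider "K = ?L1" | "K = ?L2" by blast
    then show "K = (N K \<inter> (base2 T \<inter> Hs)) <#>\<^bsub>wreath2 T\<^esub> generate (wreath2 T) (\<Union>K'\<in>{?L1, ?L2} - {K}. N K')"
    proof cases
      case 1 then show ?thesis using d1 N1 N2 g2 e1 Cc
        by (simp add: bprod_mult setmult_one_r setmult_one_l)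
    next
      case 2 then show ?thesis using d2 N1 N2 g1 e2 Cc
        by (simp add: bprod_mult setmult_one_r setmult_one_l)
    qed
  qed
qed


end


context wr begin
lemma comm_aux:
  assumes a: "a \<in> carrier T" and t: "t \<in> carrier T" and e: "a \<otimes>\<^bsub>T\<^esub> (t \<otimes>\<^bsub>T\<^esub> inv\<^bsub>T\<^esub> a \<otimes>\<^bsub>T\<^esub> inv\<^bsub>T\<^esub> t) = \<one>\<^bsub>T\<^esub>"
  shows "a \<otimes>\<^bsub>T\<^esub> t = t \<otimes>\<^bsub>T\<^esub> a"
proof -
  have "a \<otimes>\<^bsub>T\<^esub> (t \<otimes>\<^bsub>T\<^esub> inv\<^bsub>T\<^esub> a \<otimes>\<^bsub>T\<^esub> inv\<^bsub>T\<^esub> t) \<otimes>\<^bsub>T\<^esub> (t \<otimes>\<^bsub>T\<^esub> a) = t \<otimes>\<^bsub>T\<^esub> a"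
    using e a t by simp
  moreover have "a \<otimes>\<^bsub>T\<^esub> (t \<otimes>\<^bsub>T\<^esub> inv\<^bsub>T\<^esub> a \<otimes>\<^bsub>T\<^esub> inv\<^bsub>T\<^esub> t) \<otimes>\<^bsub>T\<^esub> (t \<otimes>\<^bsub>T\<^esub> a) = a \<otimes>\<^bsub>T\<^esub> t"
  proof -
    have "inv\<^bsub>T\<^esub> t \<otimes>\<^bsub>T\<^esub> (t \<otimes>\<^bsub>T\<^esub> a) = a" using a t by (simp flip: T.m_assoc)
    then have "inv\<^bsub>T\<^esub> a \<otimes>\<^bsub>T\<^esub> (inv\<^bsub>T\<^esub> t \<otimes>\<^bsub>T\<^esub> (t \<otimes>\<^bsub>T\<^esub> a)) = \<one>\<^bsub>T\<^esub>" using a by simp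
    then show ?thesis using a t by (simp add: T.m_assoc)
  qed
  ultimately show ?thesis by simp
qed

lemma noncentral:
  assumes S: "simple_group T" and nc: "\<not> comm_group T" and a: "a \<in> carrier T" "a \<noteq> \<one>\<^bsub>T\<^esub>"
  shows "\<exists>t\<in>carrier T. a \<otimes>\<^bsub>T\<^esub> t \<noteq> t \<otimes>\<^bsub>T\<^esub> a"
proof (rule ccontr)
  assume "\<not> ?thesis"
  then have ca: "\<forall>t\<in>carrier T. a \<otimes>\<^bsub>T\<^esub> t = t \<otimes>\<^bsub>T\<^esub> a" by blast
  let ?Z = "{z \<in> carrier T. \<forall>y\<in>carrier T. z \<otimes>\<^bsub>T\<^esub> y = y \<otimes>\<^bsub>T\<^esub> z}"
  have "?Z \<lhd> T"
    unfolding T.normal_inv_iff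
  proof (intro conjI ballI)
    show "subgroup ?Z T"
    proof (rule T.subgroupI)
      show "?Z \<subseteq> carrier T" by blast
      have "\<one>\<^bsub>T\<^esub> \<in> ?Z" by simp
      then show "?Z \<noteq> {}" by blast
    next
      fix z assume z: "z \<in> ?Z"
      have zc: "z \<in> carrier T" using z by blast
      show "inv\<^bsub>T\<^esub> z \<in> ?Z"
      proof (intro CollectI conjI ballI)
        show "inv\<^bsub>T\<^esub> z \<in> carrier T" using zc by (rule T.inv_closed)
        fix y assume y: "y \<in> carrier T"
        have iy: "inv\<^bsub>T\<^esub> y \<in> carrier T" using y by (rule T.inv_closed)
        have e: "z \<otimes>\<^bsub>T\<^esub> inv\<^bsub>T\<^esub> y = inv\<^bsub>T\<^esub> y \<otimes>\<^bsub>T\<^esub> z" using z iy by blast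
        have e1: "inv\<^bsub>T\<^esub> (z \<otimes>\<^bsub>T\<^esub> inv\<^bsub>T\<^esub> y) = y \<otimes>\<^bsub>T\<^esub> inv\<^bsub>T\<^esub> z" using zc y by (simp add: T.inv_mult_group)
        have e2: "inv\<^bsub>T\<^esub> (inv\<^bsub>T\<^esub> y \<otimes>\<^bsub>T\<^esub> z) = inv\<^bsub>T\<^esub> z \<otimes>\<^bsub>T\<^esub> y" using zc y by (simp add: T.inv_mult_group)
        show "inv\<^bsub>T\<^esub> z \<otimes>\<^bsub>T\<^esub> y = y \<otimes>\<^bsub>T\<^esub> inv\<^bsub>T\<^esub> z" using e e1 e2 by metis
      qed
    next
      fix z w assume z: "z \<in> ?Z" and w: "w \<in> ?Z"
      have zc: "z \<in> carrier T" and wc: "w \<in> carrier T" using z w by blast+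
      show "z \<otimes>\<^bsub>T\<^esub> w \<in> ?Z"
      proof (intro CollectI conjI ballI)
        show "z \<otimes>\<^bsub>T\<^esub> w \<in> carrier T" using zc wc by (rule T.m_closed)
        fix y assume y: "y \<in> carrier T"
        have zy: "z \<otimes>\<^bsub>T\<^esub> y = y \<otimes>\<^bsub>T\<^esub> z" using z y by blast
        have wy: "w \<otimes>\<^bsub>T\<^esub> y = y \<otimes>\<^bsub>T\<^esub> w" using w y by blast
        have "z \<otimes>\<^bsub>T\<^esub> w \<otimes>\<^bsub>T\<^esub> y = z \<otimes>\<^bsub>T\<^esub> (w \<otimes>\<^bsub>T\<^esub> y)" using zc wc y by (rule T.m_assoc)
        also have "\<dots> = z \<otimes>\<^bsub>T\<^esub> (y \<otimes>\<^bsub>T\<^esub> w)" using wy by simp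
        also have "\<dots> = (z \<otimes>\<^bsub>T\<^esub> y) \<otimes>\<^bsub>T\<^esub> w" using zc wc y by (simp add: T.m_assoc)
        also have "\<dots> = (y \<otimes>\<^bsub>T\<^esub> z) \<otimes>\<^bsub>T\<^esub> w" using zy by simp
        also have "\<dots> = y \<otimes>\<^bsub>T\<^esub> (z \<otimes>\<^bsub>T\<^esub> w)" using y zc wc by (rule T.m_assoc)
        finally show "z \<otimes>\<^bsub>T\<^esub> w \<otimes>\<^bsub>T\<^esub> y = y \<otimes>\<^bsub>T\<^esub> (z \<otimes>\<^bsub>T\<^esub> w)" .
      qed
    qed
  next
    fix x z assume x: "x \<in> carrier T" and z: "z \<in> ?Z"
    have zc: "z \<in> carrier T" and xz: "z \<otimes>\<^bsub>T\<^esub> x = x \<otimes>\<^bsub>T\<^esub> z" using x z by blast+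
    have "x \<otimes>\<^bsub>T\<^esub> z \<otimes>\<^bsub>T\<^esub> inv\<^bsub>T\<^esub> x = z \<otimes>\<^bsub>T\<^esub> x \<otimes>\<^bsub>T\<^esub> inv\<^bsub>T\<^esub> x" using xz by simp
    also have "\<dots> = z" using x zc by (simp add: T.m_assoc)
    finally show "x \<otimes>\<^bsub>T\<^esub> z \<otimes>\<^bsub>T\<^esub> inv\<^bsub>T\<^esub> x \<in> ?Z" using z by (simp only:)
  qed
  then have "?Z = carrier T \<or> ?Z = {\<one>\<^bsub>T\<^esub>}" by (rule simple_group.no_real_normal_subgroup[OF S])
  moreover have "a \<in> ?Z" using a ca by blast
  ultimately have "?Z = carrier T" using a by blast
  then have "comm_group T" by (intro T.group_comm_groupI) auto
  with nc show False by blast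
qed


lemma minimal:
  assumes S: "simple_group T" and nc: "\<not> comm_group T"
  shows "minimal_normal (base2 T) (wreath2 T)"
  unfolding minimal_normal_def
proof (intro conjI allI impI)
  show "base2 T \<lhd> wreath2 T" by (rule M_normal_W)
  have "\<exists>a\<in>carrier T. a \<noteq> \<one>\<^bsub>T\<^esub>"
  proof (rule ccontr)
    assume "\<not> (\<exists>a\<in>carrier T. a \<noteq> \<one>\<^bsub>T\<^esub>)"
    then have "carrier T = {\<one>\<^bsub>T\<^esub>}" using T.one_closed by auto
    then show False using simple_group.simple_not_triv[OF S] by simp
  qed
  then obtain a where a: "a \<in> carrier T" "a \<noteq> \<one>\<^bsub>T\<^esub>" by blast
  have "((a,a),False) \<in> base2 T" using a by (simp add: base2_def)
  then show "base2 T \<noteq> {\<one>\<^bsub>wreath2 T\<^esub>}"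
  proof (intro notI)
    assume "((a,a),False) \<in> base2 T" "base2 T = {\<one>\<^bsub>wreath2 T\<^esub>}"
    then have "((a,a),False) = \<one>\<^bsub>wreath2 T\<^esub>" by blast
    then show False using a by simp
  qed
  fix L assume L: "L \<lhd> wreath2 T \<and> L \<subseteq> base2 T"
  have Ln: "L \<lhd> wreath2 T" and Lsub: "L \<subseteq> base2 T" using L by auto
  have Ls: "subgroup L (wreath2 T)" by (rule normal_imp_subgroup[OF Ln])
  have Lc: "\<And>x h. x \<in> carrier (wreath2 T) \<Longrightarrow> h \<in> L \<Longrightarrow> x \<otimes>\<^bsub>wreath2 T\<^esub> h \<otimes>\<^bsub>wreath2 T\<^esub> inv\<^bsub>wreath2 T\<^esub> x \<in> L"
  proof -
    have "subgroup L (wreath2 T) \<and> (\<forall>x\<in>carrier (wreath2 T). \<forall>h\<in>L. x \<otimes>\<^bsub>wreath2 T\<^esub> h \<otimes>\<^bsub>wreath2 T\<^esub> inv\<^bsub>wreath2 T\<^esub> x \<in> L)"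
      by (rule W.normal_inv_iff[THEN iffD1, OF Ln])
    then show "\<And>x h. x \<in> carrier (wreath2 T) \<Longrightarrow> h \<in> L \<Longrightarrow> x \<otimes>\<^bsub>wreath2 T\<^esub> h \<otimes>\<^bsub>wreath2 T\<^esub> inv\<^bsub>wreath2 T\<^esub> x \<in> L"
      by blast
  qed
  have swapL: "((v,u),False) \<in> L" if "((u,v),False) \<in> L" for u v
  proof -
    have c: "u \<in> carrier T" "v \<in> carrier T" using that Lsub by (auto simp: base2_def)
    have "swap2 T \<otimes>\<^bsub>wreath2 T\<^esub> ((u,v),False) \<otimes>\<^bsub>wreath2 T\<^esub> inv\<^bsub>wreath2 T\<^esub> swap2 T \<in> L"
      by (rule Lc) (use that in \<open>auto simp: swap2_def\<close>)
    then show ?thesis using c by (simp add: swap2_def)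
  qed
  show "L = {\<one>\<^bsub>wreath2 T\<^esub>} \<or> L = base2 T"
  proof (cases "L = {\<one>\<^bsub>wreath2 T\<^esub>}")
    case True then show ?thesis by blast
  next
    case False
    then have "L \<noteq> {\<one>\<^bsub>wreath2 T\<^esub>}" .
    moreover have "\<one>\<^bsub>wreath2 T\<^esub> \<in> L" by (rule subgroup.one_closed[OF Ls])
    ultimately obtain x where x: "x \<in> L" "x \<noteq> \<one>\<^bsub>wreath2 T\<^esub>" by blast
    have "x \<in> base2 T" using x Lsub by blast
    then obtain a b where ab: "x = ((a,b),False)" by (auto simp: base2_def)
    have "\<exists>a b. ((a,b),False) \<in> L \<and> a \<noteq> \<one>\<^bsub>T\<^esub>"
    proof (cases "a = \<one>\<^bsub>T\<^esub>")
      case True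
      then have "b \<noteq> \<one>\<^bsub>T\<^esub>" using x ab by auto
      then show ?thesis using swapL[of a b] x ab by blast
    next
      case False then show ?thesis using x ab by blast
    qed
    then obtain a b where ab: "((a,b),False) \<in> L" "a \<noteq> \<one>\<^bsub>T\<^esub>" by blast
    have abc: "a \<in> carrier T" "b \<in> carrier T" using ab Lsub by (auto simp: base2_def)
    obtain t where t: "t \<in> carrier T" "a \<otimes>\<^bsub>T\<^esub> t \<noteq> t \<otimes>\<^bsub>T\<^esub> a"
      using noncentral[OF S nc abc(1) ab(2)] by blast
    let ?P = "{u \<in> carrier T. ((u, \<one>\<^bsub>T\<^esub>),False) \<in> L}"
    have Pn: "?P \<lhd> T"
      unfolding T.normal_inv_iff
    proof (intro conjI ballI)
      show "subgroup ?P T"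
      proof (rule T.subgroupI)
        show "?P \<subseteq> carrier T" by blast
        have "((\<one>\<^bsub>T\<^esub>, \<one>\<^bsub>T\<^esub>),False) \<in> L" using subgroup.one_closed[OF Ls] by simp
        then show "?P \<noteq> {}" by blast
      next
        fix u assume u: "u \<in> ?P"
        then have "inv\<^bsub>wreath2 T\<^esub> ((u, \<one>\<^bsub>T\<^esub>),False) \<in> L" using subgroup.m_inv_closed[OF Ls] by blast
        then show "inv\<^bsub>T\<^esub> u \<in> ?P" using u by simp
      next
        fix u w assume u: "u \<in> ?P" and w: "w \<in> ?P"
        then have "((u, \<one>\<^bsub>T\<^esub>),False) \<otimes>\<^bsub>wreath2 T\<^esub> ((w, \<one>\<^bsub>T\<^esub>),False) \<in> L"
          using subgroup.m_closed[OF Ls] by blast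
        then show "u \<otimes>\<^bsub>T\<^esub> w \<in> ?P" using u w by simp
      qed
    next
      fix y u assume y: "y \<in> carrier T" and u: "u \<in> ?P"
      have "((y, \<one>\<^bsub>T\<^esub>),False) \<otimes>\<^bsub>wreath2 T\<^esub> ((u, \<one>\<^bsub>T\<^esub>),False) \<otimes>\<^bsub>wreath2 T\<^esub> inv\<^bsub>wreath2 T\<^esub> ((y, \<one>\<^bsub>T\<^esub>),False) \<in> L"
        by (rule Lc) (use y u in auto)
      then show "y \<otimes>\<^bsub>T\<^esub> u \<otimes>\<^bsub>T\<^esub> inv\<^bsub>T\<^esub> y \<in> ?P" using y u by simp
    qed
    let ?c = "a \<otimes>\<^bsub>T\<^esub> (t \<otimes>\<^bsub>T\<^esub> inv\<^bsub>T\<^esub> a \<otimes>\<^bsub>T\<^esub> inv\<^bsub>T\<^esub> t)"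
    have "((t, \<one>\<^bsub>T\<^esub>),False) \<otimes>\<^bsub>wreath2 T\<^esub> inv\<^bsub>wreath2 T\<^esub> ((a,b),False) \<otimes>\<^bsub>wreath2 T\<^esub> inv\<^bsub>wreath2 T\<^esub> ((t, \<one>\<^bsub>T\<^esub>),False) \<in> L"
      by (rule Lc) (use t abc subgroup.m_inv_closed[OF Ls ab(1)] in auto)
    then have "((a,b),False) \<otimes>\<^bsub>wreath2 T\<^esub> (((t, \<one>\<^bsub>T\<^esub>),False) \<otimes>\<^bsub>wreath2 T\<^esub> inv\<^bsub>wreath2 T\<^esub> ((a,b),False) \<otimes>\<^bsub>wreath2 T\<^esub> inv\<^bsub>wreath2 T\<^esub> ((t, \<one>\<^bsub>T\<^esub>),False)) \<in> L"
      using subgroup.m_closed[OF Ls ab(1)] by blast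
    moreover have "b \<otimes>\<^bsub>T\<^esub> (\<one>\<^bsub>T\<^esub> \<otimes>\<^bsub>T\<^esub> inv\<^bsub>T\<^esub> b \<otimes>\<^bsub>T\<^esub> inv\<^bsub>T\<^esub> \<one>\<^bsub>T\<^esub>) = \<one>\<^bsub>T\<^esub>"
      using abc by simp
    ultimately have "((?c, \<one>\<^bsub>T\<^esub>),False) \<in> L" using t abc by simp
    then have cP: "?c \<in> ?P" using t abc by simp
    have cn: "?c \<noteq> \<one>\<^bsub>T\<^esub>" using comm_aux[OF abc(1) t(1)] t(2) by blast
    have "?P = carrier T \<or> ?P = {\<one>\<^bsub>T\<^esub>}" by (rule simple_group.no_real_normal_subgroup[OF S Pn])
    then have Pall: "?P = carrier T" using cP cn by blast
    show ?thesis
    proof (rule disjI2)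
    show "L = base2 T"
    proof
      show "L \<subseteq> base2 T" by (rule Lsub)
      show "base2 T \<subseteq> L"
      proof
        fix m assume "m \<in> base2 T"
        then obtain u v where m: "m = ((u,v),False)" "u \<in> carrier T" "v \<in> carrier T"
          unfolding base2_def by blast
        have "((u, \<one>\<^bsub>T\<^esub>),False) \<in> L" "((v, \<one>\<^bsub>T\<^esub>),False) \<in> L" using Pall m by blast+
        then have "((u, \<one>\<^bsub>T\<^esub>),False) \<in> L" "((\<one>\<^bsub>T\<^esub>, v),False) \<in> L" using swapL by blast+
        then have "((u, \<one>\<^bsub>T\<^esub>),False) \<otimes>\<^bsub>wreath2 T\<^esub> ((\<one>\<^bsub>T\<^esub>, v),False) \<in> L"
          using subgroup.m_closed[OF Ls] by blast
        then show "m \<in> L" using m by simp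
      qed
    qed
    qed
  qed
qed


lemma mult_carrier_r: "subgroup U T \<Longrightarrow> U <#>\<^bsub>T\<^esub> carrier T = carrier T"
proof
  assume U: "subgroup U T"
  show "U <#>\<^bsub>T\<^esub> carrier T \<subseteq> carrier T"
    unfolding set_mult_def using subgroup.subset[OF U] by blast
  show "carrier T \<subseteq> U <#>\<^bsub>T\<^esub> carrier T"
  proof
    fix t assume t: "t \<in> carrier T"
    show "t \<in> U <#>\<^bsub>T\<^esub> carrier T"
      by (rule set_mult_I[OF subgroup.one_closed[OF U] t]) (use t in simp)
  qed
qed

lemma swap_prod:
  assumes A: "subgroup A T" and B: "subgroup B T" and AB: "A <#>\<^bsub>T\<^esub> B = carrier T"
  shows "B <#>\<^bsub>T\<^esub> A = carrier T"
proof
  show "B <#>\<^bsub>T\<^esub> A \<subseteq> carrier T"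
    unfolding set_mult_def using subgroup.subset[OF A] subgroup.subset[OF B] by blast
  show "carrier T \<subseteq> B <#>\<^bsub>T\<^esub> A"
  proof
    fix t assume t: "t \<in> carrier T"
    then have "inv\<^bsub>T\<^esub> t \<in> A <#>\<^bsub>T\<^esub> B" using AB by simp
    then obtain a b where ab: "a \<in> A" "b \<in> B" "inv\<^bsub>T\<^esub> t = a \<otimes>\<^bsub>T\<^esub> b"
      unfolding set_mult_def by blast
    have c: "a \<in> carrier T" "b \<in> carrier T" using ab subgroup.subset[OF A] subgroup.subset[OF B] by auto
    have "t = inv\<^bsub>T\<^esub> (a \<otimes>\<^bsub>T\<^esub> b)" using ab(3) t by (metis T.inv_inv)
    also have "\<dots> = inv\<^bsub>T\<^esub> b \<otimes>\<^bsub>T\<^esub> inv\<^bsub>T\<^esub> a" using c by (simp add: T.inv_mult_group)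
    finally show "t \<in> B <#>\<^bsub>T\<^esub> A"
      by (intro set_mult_I[of "inv\<^bsub>T\<^esub> b" _ "inv\<^bsub>T\<^esub> a"])
         (use ab A B in \<open>auto simp: subgroup.m_inv_closed\<close>)
  qed
qed

end

theorem mainTheorem11:
  fixes T :: "'a monoid" and A B :: "'a set"
  assumes "simple_group T" and "finite (carrier T)" and "\<not> comm_group T"
    and "subgroup A T" and "A \<noteq> carrier T"
    and "subgroup B T" and "B \<noteq> carrier T"
    and "A <#>\<^bsub>T\<^esub> B = carrier T"
  defines "G \<equiv> wreath2 T"
    and "M \<equiv> base2 T"
    and "s \<equiv> swap2 T"
    and "K1 \<equiv> bprod A B"
    and "K2 \<equiv> bprod B A"
    and "H \<equiv> (bprod A B \<inter> bprod B A) <#>\<^bsub>wreath2 T\<^esub> {\<one>\<^bsub>wreath2 T\<^esub>, swap2 T}"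
    and "\<Omega> \<equiv> lcosets\<^bsub>wreath2 T\<^esub> ((bprod A B \<inter> bprod B A) <#>\<^bsub>wreath2 T\<^esub> {\<one>\<^bsub>wreath2 T\<^esub>, swap2 T})"
    and "\<phi> \<equiv> coset_action (wreath2 T) ((bprod A B \<inter> bprod B A) <#>\<^bsub>wreath2 T\<^esub> {\<one>\<^bsub>wreath2 T\<^esub>, swap2 T})"
    and "\<sigma>1 \<equiv> (\<lambda>x :: ('a \<times> 'a) \<times> bool. fst (fst x))"
    and "\<sigma>2 \<equiv> (\<lambda>x :: ('a \<times> 'a) \<times> bool. snd (fst x))"
  shows "K1 \<inter> K2 = bprod (A \<inter> B) (A \<inter> B)
    \<and> (\<lambda>k. s \<otimes>\<^bsub>G\<^esub> k \<otimes>\<^bsub>G\<^esub> inv\<^bsub>G\<^esub> s) ` (K1 \<inter> K2) = K1 \<inter> K2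
    \<and> transitive_action G \<Omega> \<phi>
    \<and> minimal_normal M G \<and> transitive_on M \<Omega> \<phi>
    \<and> (cartesian_system G \<phi> M H {K1, K2}
       \<and> \<not> M_normal G \<phi> M H {K1, K2}
       \<and> card {\<sigma>1 ` K | K. K \<in> {K1, K2} \<and> \<sigma>1 ` K \<noteq> carrier T} = 2
       \<and> card {\<sigma>2 ` K | K. K \<in> {K1, K2} \<and> \<sigma>2 ` K \<noteq> carrier T} = 2)
    \<and> (cartesian_system G \<phi> M H {bprod (A \<inter> B) (carrier T), bprod (carrier T) (A \<inter> B)}
       \<and> M_normal G \<phi> M H {bprod (A \<inter> B) (carrier T), bprod (carrier T) (A \<inter> B)})"
proof -
  have gT: "group T" using assms(1) by (simp add: simple_group_def)
  interpret wr2 T A B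
    using gT assms(4) assms(6) by (simp add: wr2_def wr2_axioms_def wr_def)
  have Ac: "A \<subseteq> carrier T" and Bc: "B \<subseteq> carrier T" using subgroup.subset assms(4,6) by auto
  have BA: "B <#>\<^bsub>T\<^esub> A = carrier T" by (rule swap_prod[OF assms(4,6,8)])
  have AneB: "A \<noteq> B"
  proof
    assume e: "A = B"
    have "A <#>\<^bsub>T\<^esub> B \<subseteq> A" unfolding set_mult_def e using subgroup.m_closed[OF assms(6)] by blast
    then show False using assms(5,8) Ac by blast
  qed
  have Cc: "A \<inter> B \<subseteq> carrier T" using Ac by blast
  have Cn: "A \<inter> B \<noteq> carrier T" using assms(5) Ac by blast
  have neA: "A \<noteq> {}" and neB: "B \<noteq> {}" using subgroup.one_closed assms(4,6) by blast+
  have c1: "cartesian_system (wreath2 T) (coset_action (wreath2 T) Hs) (base2 T) Hs {bprod A B, bprod B A}"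
    by (rule cart[OF assms(4,6) Int_lower1 Int_lower2 refl assms(8) BA AneB])
  have c2: "cartesian_system (wreath2 T) (coset_action (wreath2 T) Hs) (base2 T) Hs
      {bprod (A \<inter> B) (carrier T), bprod (carrier T) (A \<inter> B)}"
    by (rule cart[OF C_sub T.subgroup_self order_refl Cc _ mult_carrier_r[OF C_sub]
          T.set_mult_carrier_idem[OF C_sub] Cn]) (use Cc in blast)
  have sw: "(\<lambda>k. swap2 T \<otimes>\<^bsub>wreath2 T\<^esub> k \<otimes>\<^bsub>wreath2 T\<^esub> inv\<^bsub>wreath2 T\<^esub> swap2 T) ` bprod (A \<inter> B) (A \<inter> B)
       = bprod (A \<inter> B) (A \<inter> B)"
    using conj_eq[OF C_sub C_sub order_refl order_refl swap_Hs] by (simp add: swap2_def)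
  have i1: "(\<lambda>x :: ('a \<times> 'a) \<times> bool. fst (fst x)) ` bprod A B = A" "(\<lambda>x :: ('a \<times> 'a) \<times> bool. fst (fst x)) ` bprod B A = B"
    using img1 neA neB by auto
  have i2: "(\<lambda>x :: ('a \<times> 'a) \<times> bool. snd (fst x)) ` bprod A B = B" "(\<lambda>x :: ('a \<times> 'a) \<times> bool. snd (fst x)) ` bprod B A = A"
    using img2 neA neB by auto
  have card1: "card {(\<lambda>x :: ('a \<times> 'a) \<times> bool. fst (fst x)) ` K | K. K \<in> {bprod A B, bprod B A} \<and> (\<lambda>x :: ('a \<times> 'a) \<times> bool. fst (fst x)) ` K \<noteq> carrier T} = 2"
  proof -
    have "{(\<lambda>x :: ('a \<times> 'a) \<times> bool. fst (fst x)) ` K | K. K \<in> {bprod A B, bprod B A} \<and> (\<lambda>x :: ('a \<times> 'a) \<times> bool. fst (fst x)) ` K \<noteq> carrier T} = {A, B}"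
    proof -
      have n: "(\<lambda>x :: ('a \<times> 'a) \<times> bool. fst (fst x)) ` bprod A B \<noteq> carrier T" "(\<lambda>x :: ('a \<times> 'a) \<times> bool. fst (fst x)) ` bprod B A \<noteq> carrier T" using i1 assms(5,7) by simp_all
      have "{(\<lambda>x :: ('a \<times> 'a) \<times> bool. fst (fst x)) ` K | K. K \<in> {bprod A B, bprod B A} \<and> (\<lambda>x :: ('a \<times> 'a) \<times> bool. fst (fst x)) ` K \<noteq> carrier T} = {(\<lambda>x :: ('a \<times> 'a) \<times> bool. fst (fst x)) ` bprod A B, (\<lambda>x :: ('a \<times> 'a) \<times> bool. fst (fst x)) ` bprod B A}"
        using n by blast
      then show ?thesis using i1 by simp
    qed
    then show ?thesis using AneB by simp
  qed
  have card2: "card {(\<lambda>x :: ('a \<times> 'a) \<times> bool. snd (fst x)) ` K | K. K \<in> {bprod A B, bprod B A} \<and> (\<lambda>x :: ('a \<times> 'a) \<times> bool. snd (fst x)) ` K \<noteq> carrier T} = 2"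
  proof -
    have "{(\<lambda>x :: ('a \<times> 'a) \<times> bool. snd (fst x)) ` K | K. K \<in> {bprod A B, bprod B A} \<and> (\<lambda>x :: ('a \<times> 'a) \<times> bool. snd (fst x)) ` K \<noteq> carrier T} = {B, A}"
    proof -
      have n: "(\<lambda>x :: ('a \<times> 'a) \<times> bool. snd (fst x)) ` bprod A B \<noteq> carrier T" "(\<lambda>x :: ('a \<times> 'a) \<times> bool. snd (fst x)) ` bprod B A \<noteq> carrier T" using i2 assms(5,7) by simp_all
      have "{(\<lambda>x :: ('a \<times> 'a) \<times> bool. snd (fst x)) ` K | K. K \<in> {bprod A B, bprod B A} \<and> (\<lambda>x :: ('a \<times> 'a) \<times> bool. snd (fst x)) ` K \<noteq> carrier T} = {(\<lambda>x :: ('a \<times> 'a) \<times> bool. snd (fst x)) ` bprod A B, (\<lambda>x :: ('a \<times> 'a) \<times> bool. snd (fst x)) ` bprod B A}"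
        using n by blast
      then show ?thesis using i2 by simp
    qed
    then show ?thesis using AneB by simp
  qed
  show ?thesis
    unfolding assms(9-18) H_is_Hs
    using K12 sw trans_W minimal[OF assms(1,3)] trans_M c1 not_Mnormal[OF assms(1,5,7) AneB]
      card1 card2 c2 Mnormal_b[OF assms(5)]
    by (simp only: simp_thms)
qed

end
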